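(* Let $\mu$ be a probability measure and let $P$ be a sub-Markov operator on $L^2(\mu)$, with adjoint $P^*$ on $L^2(\mu)$, such that $\mathrm{Ker}(1-P^*P)=\{0\}$. Then $$\|P\|_2:=\sup_{\mu(f^2)\le1}\mu\big((Pf)^2\big)^{1/2}<1$$ if and only if $$\|P\|_{tail}:=\lim_{R\to\infty}\sup_{\mu(f^2)\le1}\mu\Big(\big((|Pf|-R)^+\big)^2\Big)<1.$$
   Context: A sub-Markov operator on $L^2(\mu)$ is a linear contraction $P$ on $L^2(\mu)$ with $P1\le1$ and $Pf\ge0$ whenever $f\ge0$. *)

theory Defs
  imports "HOL-Probability.Probability"
begin

text \<open>Real L^2(M), represented by square-integrable measurable functions;
  operators act on representatives and must respect a.e. equality.\<close>

definition L2 :: "'a measure \<Rightarrow> ('a \<Rightarrow> real) set" where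
  "L2 M = {f. f \<in> borel_measurable M \<and> integrable M (\<lambda>x. (f x)\<^sup>2)}"

definition L2_operator :: "'a measure \<Rightarrow> (('a \<Rightarrow> real) \<Rightarrow> ('a \<Rightarrow> real)) \<Rightarrow> bool" where
  "L2_operator M P \<longleftrightarrow>
     (\<forall>f\<in>L2 M. P f \<in> L2 M) \<and>
     (\<forall>f\<in>L2 M. \<forall>g\<in>L2 M. (AE x in M. f x = g x) \<longrightarrow> (AE x in M. P f x = P g x)) \<and>
     (\<forall>f\<in>L2 M. \<forall>g\<in>L2 M. \<forall>a b::real.
        AE x in M. P (\<lambda>y. a * f y + b * g y) x = a * P f x + b * P g x)"

definition sub_markov :: "'a measure \<Rightarrow> (('a \<Rightarrow> real) \<Rightarrow> ('a \<Rightarrow> real)) \<Rightarrow> bool" where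
  "sub_markov M P \<longleftrightarrow>
     L2_operator M P \<and>
     (\<forall>f\<in>L2 M. (\<integral>x. (P f x)\<^sup>2 \<partial>M) \<le> (\<integral>x. (f x)\<^sup>2 \<partial>M)) \<and>
     (AE x in M. P (\<lambda>_. 1) x \<le> 1) \<and>
     (\<forall>f\<in>L2 M. (AE x in M. f x \<ge> 0) \<longrightarrow> (AE x in M. P f x \<ge> 0))"

definition is_adjoint :: "'a measure \<Rightarrow> (('a \<Rightarrow> real) \<Rightarrow> ('a \<Rightarrow> real))
    \<Rightarrow> (('a \<Rightarrow> real) \<Rightarrow> ('a \<Rightarrow> real)) \<Rightarrow> bool" where
  "is_adjoint M P Q \<longleftrightarrow>
     L2_operator M Q \<and>
     (\<forall>f\<in>L2 M. \<forall>g\<in>L2 M. (\<integral>x. P f x * g x \<partial>M) = (\<integral>x. f x * Q g x \<partial>M))"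

definition trivial_kernel_id_minus :: "'a measure \<Rightarrow> (('a \<Rightarrow> real) \<Rightarrow> ('a \<Rightarrow> real)) \<Rightarrow> bool" where
  "trivial_kernel_id_minus M T \<longleftrightarrow>
     (\<forall>f\<in>L2 M. (AE x in M. f x - T f x = 0) \<longrightarrow> (AE x in M. f x = 0))"

definition unit_ball_L2 :: "'a measure \<Rightarrow> ('a \<Rightarrow> real) set" where
  "unit_ball_L2 M = {f\<in>L2 M. (\<integral>x. (f x)\<^sup>2 \<partial>M) \<le> 1}"

definition op_norm2 :: "'a measure \<Rightarrow> (('a \<Rightarrow> real) \<Rightarrow> ('a \<Rightarrow> real)) \<Rightarrow> real" where
  "op_norm2 M P = (SUP f\<in>unit_ball_L2 M. sqrt (\<integral>x. (P f x)\<^sup>2 \<partial>M))"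

definition tail_norm :: "'a measure \<Rightarrow> (('a \<Rightarrow> real) \<Rightarrow> ('a \<Rightarrow> real)) \<Rightarrow> real" where
  "tail_norm M P = Lim at_top (\<lambda>R::real.
      SUP f\<in>unit_ball_L2 M. (\<integral>x. (max (\<bar>P f x\<bar> - R) 0)\<^sup>2 \<partial>M))"

end

theory Submission
  imports Defs
begin
context prob_space begin

lemma L2D: "f \<in> L2 M \<Longrightarrow> f \<in> borel_measurable M" "f \<in> L2 M \<Longrightarrow> integrable M (\<lambda>x. (f x)\<^sup>2)"
  by (auto simp: L2_def)

lemma L2_prod_int:
  assumes "f \<in> L2 M" "g \<in> L2 M"
  shows "integrable M (\<lambda>x. f x * g x)"
proof (rule Bochner_Integration.integrable_bound[of _ "\<lambda>x. (f x)\<^sup>2 + (g x)\<^sup>2"])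
  show "integrable M (\<lambda>x. (f x)\<^sup>2 + (g x)\<^sup>2)" using assms by (auto simp: L2_def)
  show "(\<lambda>x. f x * g x) \<in> borel_measurable M" using assms by (auto simp: L2_def)
  show "AE x in M. norm (f x * g x) \<le> norm ((f x)\<^sup>2 + (g x)\<^sup>2)"
  proof (rule AE_I2)
    fix x
    have "2 * \<bar>f x * g x\<bar> \<le> (f x)\<^sup>2 + (g x)\<^sup>2"
      using sum_squares_bound[of "\<bar>f x\<bar>" "\<bar>g x\<bar>"] by (simp add: abs_mult power2_eq_square)
    then show "norm (f x * g x) \<le> norm ((f x)\<^sup>2 + (g x)\<^sup>2)" by simp
  qed
qed

lemma L2_lin:
  assumes "f \<in> L2 M" "g \<in> L2 M"
  shows "(\<lambda>x. a * f x + b * g x) \<in> L2 M"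
proof -
  have "integrable M (\<lambda>x. a\<^sup>2 * (f x)\<^sup>2 + 2*a*b * (f x * g x) + b\<^sup>2 * (g x)\<^sup>2)"
    using assms L2_prod_int[OF assms] by (auto simp: L2_def)
  moreover have "(\<lambda>x. a\<^sup>2 * (f x)\<^sup>2 + 2*a*b * (f x * g x) + b\<^sup>2 * (g x)\<^sup>2) = (\<lambda>x. (a * f x + b * g x)\<^sup>2)"
    by (auto simp: power2_eq_square algebra_simps)
  ultimately show ?thesis using assms by (auto simp: L2_def)
qed

lemma L2_const: "(\<lambda>x. c) \<in> L2 M"
  by (auto simp: L2_def)

lemma L2_abs: "f \<in> L2 M \<Longrightarrow> (\<lambda>x. \<bar>f x\<bar>) \<in> L2 M"
  by (auto simp: L2_def)

lemma L2_diff: "f \<in> L2 M \<Longrightarrow> g \<in> L2 M \<Longrightarrow> (\<lambda>x. f x - g x) \<in> L2 M"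
  using L2_lin[of f g 1 "-1"] by simp

lemma L2_add: "f \<in> L2 M \<Longrightarrow> g \<in> L2 M \<Longrightarrow> (\<lambda>x. f x + g x) \<in> L2 M"
  using L2_lin[of f g 1 1] by simp

lemma L2_scale: "f \<in> L2 M \<Longrightarrow> (\<lambda>x. a * f x) \<in> L2 M"
  using L2_lin[of f f a 0] by simp

end

context prob_space begin

lemma L2_complete:
  fixes f :: "nat \<Rightarrow> 'a \<Rightarrow> real"
  assumes f: "\<And>k. f k \<in> L2 M"
  and C: "\<And>e. e > 0 \<Longrightarrow> \<exists>N. \<forall>j\<ge>N. \<forall>k\<ge>N. (\<integral>x. (f j x - f k x)\<^sup>2 \<partial>M) < e"
  shows "\<exists>G\<in>L2 M. \<forall>e>0. \<exists>N. \<forall>k\<ge>N. (\<integral>x. (f k x - G x)\<^sup>2 \<partial>M) < e"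
proof -
  have "\<forall>i. \<exists>N. \<forall>j\<ge>N. \<forall>k\<ge>N. (\<integral>x. (f j x - f k x)\<^sup>2 \<partial>M) < (1/4)^i"
    using C by simp
  then obtain N where N: "\<And>i j k. j \<ge> N i \<Longrightarrow> k \<ge> N i \<Longrightarrow> (\<integral>x. (f j x - f k x)\<^sup>2 \<partial>M) < (1/4)^i"
    by metis
  define n where "n i = Max (N ` {..i}) + i" for i
  have nN: "N i \<le> n i" for i unfolding n_def
    by (metis Max_ge atMost_iff finite_atMost finite_imageI image_eqI order_refl trans_le_add1)
  have nmono: "n i \<le> n k" if "i \<le> k" for i k
  proof -
    have mx: "Max (N ` {..i}) \<le> Max (N ` {..k})"
      using that by (intro Max_mono) auto
    show ?thesis using add_mono[OF mx that] unfolding n_def by simp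
  qed
  define g where "g i = f (n i)" for i
  define u where "u i x = g (Suc i) x - g i x" for i x
  have gL2: "g i \<in> L2 M" for i unfolding g_def using f by simp
  have uL2: "u i \<in> L2 M" for i unfolding u_def[abs_def] using gL2 L2_diff by blast
  have [measurable]: "g i \<in> borel_measurable M" for i using gL2 L2D by blast
  have [measurable]: "u i \<in> borel_measurable M" for i using uL2 L2D by blast
  have gclose: "(\<integral>x. (g k x - g i x)\<^sup>2 \<partial>M) < (1/4)^i" if "i \<le> k" for i k
    unfolding g_def using N[of i "n k" "n i"] nN[of i] nmono[OF that] by simp
  have u_sq: "(\<integral>x. (u i x)\<^sup>2 \<partial>M) < (1/4)^i" for i
    unfolding u_def using gclose[of i "Suc i"] by simp
  have int_abs: "integrable M (\<lambda>x. \<bar>u i x\<bar>)" for i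
    using L2_abs[OF uL2] L2D L2_prod_int[OF L2_abs[OF uL2] L2_const[of 1]] by simp
  have u_abs: "(\<integral>x. \<bar>u i x\<bar> \<partial>M) \<le> (1/2)^i" for i
  proof -
    define a :: real where "a = (1/2)^i"
    have a: "a > 0" unfolding a_def by simp
    have aa: "(1/4::real)^i = a * a" unfolding a_def
      by (simp add: power_mult_distrib[symmetric])
    have pt: "\<bar>u i x\<bar> \<le> ((u i x)\<^sup>2 / a + a) / 2" for x
    proof -
      have "0 \<le> (\<bar>u i x\<bar> - a)\<^sup>2" by simp
      then have "2 * a * \<bar>u i x\<bar> \<le> (u i x)\<^sup>2 + a * a" by (simp add: power2_eq_square algebra_simps)
      then show ?thesis using a by (simp add: field_simps power2_eq_square)
    qed
    have int1: "integrable M (\<lambda>x. (u i x)\<^sup>2)" using uL2 L2D by blast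
    have "(\<integral>x. \<bar>u i x\<bar> \<partial>M) \<le> (\<integral>x. ((u i x)\<^sup>2 / a + a) / 2 \<partial>M)"
      using pt int1 int_abs
      by (intro integral_mono) (auto intro!: Bochner_Integration.integrable_add Bochner_Integration.integrable_divide)
    also have "\<dots> = ((\<integral>x. (u i x)\<^sup>2 \<partial>M) / a + a) / 2"
      using int1 by (simp add: Bochner_Integration.integral_add Bochner_Integration.integrable_divide prob_space)
    also have "\<dots> \<le> (a * a / a + a) / 2" using u_sq[of i] aa a
      by (intro divide_right_mono add_right_mono) auto
    also have "\<dots> = a" using a by simp
    finally show ?thesis unfolding a_def .
  qed
  have "(\<integral>\<^sup>+x. (\<Sum>i. ennreal \<bar>u i x\<bar>) \<partial>M) = (\<Sum>i. (\<integral>\<^sup>+x. ennreal \<bar>u i x\<bar> \<partial>M))"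
    by (intro nn_integral_suminf) measurable
  also have "\<dots> = (\<Sum>i. ennreal (\<integral>x. \<bar>u i x\<bar> \<partial>M))"
    using int_abs by (intro suminf_cong nn_integral_eq_integral) auto
  also have "\<dots> \<le> (\<Sum>i. ennreal ((1/2)^i))"
    using u_abs by (intro suminf_le summableI) (auto intro: ennreal_leI)
  also have "\<dots> = ennreal (\<Sum>i. (1/2::real)^i)"
    by (intro suminf_ennreal2) auto
  also have "\<dots> < \<infinity>" by simp
  finally have "(\<integral>\<^sup>+x. (\<Sum>i. ennreal \<bar>u i x\<bar>) \<partial>M) \<noteq> \<infinity>" by simp
  then have "AE x in M. (\<Sum>i. ennreal \<bar>u i x\<bar>) \<noteq> \<infinity>"
    by (intro nn_integral_PInf_AE) measurable
  then have conv: "AE x in M. (\<lambda>i. g i x) \<longlonglongrightarrow> lim (\<lambda>i. g i x)"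
  proof (rule AE_mp, intro AE_I2 impI)
    fix x assume "(\<Sum>i. ennreal \<bar>u i x\<bar>) \<noteq> \<infinity>"
    then have "summable (\<lambda>i. \<bar>u i x\<bar>)" by (intro summable_suminf_not_top) auto
    then have "summable (\<lambda>i. u i x)" by (rule summable_rabs_cancel)
    then have "(\<lambda>m. \<Sum>i<m. u i x) \<longlonglongrightarrow> (\<Sum>i. u i x)" by (rule summable_LIMSEQ)
    then have "(\<lambda>m. g 0 x + (\<Sum>i<m. u i x)) \<longlonglongrightarrow> g 0 x + (\<Sum>i. u i x)" by (intro tendsto_intros)
    moreover have "g 0 x + (\<Sum>i<m. u i x) = g m x" for m
      unfolding u_def using sum_lessThan_telescope[of "\<lambda>i. g i x" m] by simp
    ultimately have "convergent (\<lambda>i. g i x)" unfolding convergent_def by auto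
    then show "(\<lambda>i. g i x) \<longlonglongrightarrow> lim (\<lambda>i. g i x)" by (simp add: convergent_LIMSEQ_iff)
  qed
  define G where "G x = lim (\<lambda>i. g i x)" for x
  have [measurable]: "G \<in> borel_measurable M" unfolding G_def by measurable
  have fatou: "integrable M (\<lambda>x. (G x - g i x)\<^sup>2) \<and> (\<integral>x. (G x - g i x)\<^sup>2 \<partial>M) \<le> (1/4)^i" for i
  proof -
    have "(\<integral>\<^sup>+x. ennreal ((G x - g i x)\<^sup>2) \<partial>M) = (\<integral>\<^sup>+x. liminf (\<lambda>k. ennreal ((g k x - g i x)\<^sup>2)) \<partial>M)"
    proof (intro nn_integral_cong_AE, rule AE_mp[OF conv], intro AE_I2 impI)
      fix x assume "(\<lambda>k. g k x) \<longlonglongrightarrow> lim (\<lambda>k. g k x)"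
      then have "(\<lambda>k. ennreal ((g k x - g i x)\<^sup>2)) \<longlonglongrightarrow> ennreal ((G x - g i x)\<^sup>2)"
        unfolding G_def by (intro tendsto_intros)
      then show "ennreal ((G x - g i x)\<^sup>2) = liminf (\<lambda>k. ennreal ((g k x - g i x)\<^sup>2))"
        by (intro lim_imp_Liminf[symmetric]) auto
    qed
    also have "\<dots> \<le> liminf (\<lambda>k. (\<integral>\<^sup>+x. ennreal ((g k x - g i x)\<^sup>2) \<partial>M))"
      by (intro nn_integral_liminf) measurable
    also have "\<dots> \<le> limsup (\<lambda>k. (\<integral>\<^sup>+x. ennreal ((g k x - g i x)\<^sup>2) \<partial>M))"
      by (intro Liminf_le_Limsup) simp
    also have "\<dots> \<le> ennreal ((1/4)^i)"
    proof (intro Limsup_bounded eventually_sequentiallyI)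
      fix k assume "i \<le> k"
      have "(\<integral>\<^sup>+x. ennreal ((g k x - g i x)\<^sup>2) \<partial>M) = ennreal (\<integral>x. (g k x - g i x)\<^sup>2 \<partial>M)"
        using L2_diff[OF gL2 gL2] L2D by (intro nn_integral_eq_integral) auto
      then show "(\<integral>\<^sup>+x. ennreal ((g k x - g i x)\<^sup>2) \<partial>M) \<le> ennreal ((1/4)^i)"
        using gclose[OF \<open>i \<le> k\<close>] by (auto intro: ennreal_leI)
    qed
    finally have le: "(\<integral>\<^sup>+x. ennreal ((G x - g i x)\<^sup>2) \<partial>M) \<le> ennreal ((1/4)^i)" .
    have intg: "integrable M (\<lambda>x. (G x - g i x)\<^sup>2)"
      using le by (intro integrableI_bounded) (auto simp: top_unique ennreal_less_top intro: le_less_trans)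
    then have "ennreal (\<integral>x. (G x - g i x)\<^sup>2 \<partial>M) \<le> ennreal ((1/4)^i)"
      using le by (subst nn_integral_eq_integral[symmetric]) auto
    then show ?thesis using intg by (simp add: ennreal_le_iff)
  qed
  have GL2: "G \<in> L2 M"
  proof -
    have "(\<lambda>x. G x - g 0 x) \<in> L2 M" using fatou[of 0] by (auto simp: L2_def)
    from L2_add[OF this gL2[of 0]] show ?thesis by simp
  qed
  show ?thesis
  proof (intro bexI[OF _ GL2] allI impI)
    fix e :: real assume e: "e > 0"
    obtain i where i: "(1/4::real)^i < e/4" using real_arch_pow_inv[of "e/4" "1/4"] e by auto
    show "\<exists>N. \<forall>k\<ge>N. (\<integral>x. (f k x - G x)\<^sup>2 \<partial>M) < e"
    proof (intro exI allI impI)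
      fix k assume k: "n i \<le> k"
      have pt: "(f k x - G x)\<^sup>2 \<le> 2 * (f k x - g i x)\<^sup>2 + 2 * (G x - g i x)\<^sup>2" for x
      proof -
        have "0 \<le> (f k x + G x - 2 * g i x)\<^sup>2" by simp
        then show ?thesis by (simp add: power2_eq_square algebra_simps)
      qed
      have i1: "integrable M (\<lambda>x. (f k x - g i x)\<^sup>2)" using L2_diff[OF f gL2] L2D by blast
      have i2: "integrable M (\<lambda>x. (f k x - G x)\<^sup>2)" using L2_diff[OF f GL2] L2D by blast
      have "(\<integral>x. (f k x - G x)\<^sup>2 \<partial>M) \<le> (\<integral>x. 2 * (f k x - g i x)\<^sup>2 + 2 * (G x - g i x)\<^sup>2 \<partial>M)"
        using pt i1 i2 fatou[of i] by (intro integral_mono) auto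
      also have "\<dots> = 2 * (\<integral>x. (f k x - g i x)\<^sup>2 \<partial>M) + 2 * (\<integral>x. (G x - g i x)\<^sup>2 \<partial>M)"
        using i1 fatou[of i] by simp
      also have "\<dots> < 2 * (1/4)^i + 2 * (1/4)^i"
        using N[of i k "n i"] nN[of i] k fatou[of i] unfolding g_def by auto
      also have "\<dots> < e" using i by simp
      finally show "(\<integral>x. (f k x - G x)\<^sup>2 \<partial>M) < e" .
    qed
  qed
qed

end

lemma L2_integrable: "prob_space M \<Longrightarrow> f \<in> L2 M \<Longrightarrow> integrable M f"
  using prob_space.L2_prod_int[of M f "\<lambda>x. 1"] prob_space.L2_const by fastforce

locale setting = prob_space M for M :: "'a measure" +
  fixes P Q :: "('a \<Rightarrow> real) \<Rightarrow> ('a \<Rightarrow> real)"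
  assumes sm: "sub_markov M P" and adj: "is_adjoint M P Q"
begin

definition nsq :: "('a \<Rightarrow> real) \<Rightarrow> real" where "nsq f = (\<integral>x. (f x)\<^sup>2 \<partial>M)"
definition ip :: "('a \<Rightarrow> real) \<Rightarrow> ('a \<Rightarrow> real) \<Rightarrow> real" where "ip f g = (\<integral>x. f x * g x \<partial>M)"
definition q :: "('a \<Rightarrow> real) \<Rightarrow> real" where "q f = nsq f - nsq (P f)"
definition B :: "('a \<Rightarrow> real) \<Rightarrow> ('a \<Rightarrow> real) \<Rightarrow> real" where "B f g = ip f g - ip (P f) (P g)"

lemma PL2: "f \<in> L2 M \<Longrightarrow> P f \<in> L2 M"
  using sm by (auto simp: sub_markov_def L2_operator_def)
lemma QL2: "f \<in> L2 M \<Longrightarrow> Q f \<in> L2 M"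
  using adj by (auto simp: is_adjoint_def L2_operator_def)
lemma Plin: "f \<in> L2 M \<Longrightarrow> g \<in> L2 M \<Longrightarrow> AE x in M. P (\<lambda>y. a * f y + b * g y) x = a * P f x + b * P g x"
  using sm by (auto simp: sub_markov_def L2_operator_def)
lemma Pcontr: "f \<in> L2 M \<Longrightarrow> nsq (P f) \<le> nsq f"
  using sm by (auto simp: sub_markov_def nsq_def)
lemma Ppos: "f \<in> L2 M \<Longrightarrow> AE x in M. f x \<ge> 0 \<Longrightarrow> AE x in M. P f x \<ge> 0"
  using sm by (auto simp: sub_markov_def)
lemma adjI: "f \<in> L2 M \<Longrightarrow> g \<in> L2 M \<Longrightarrow> ip (P f) g = ip f (Q g)"
  using adj by (auto simp: is_adjoint_def ip_def)

lemma nsq_nonneg: "nsq f \<ge> 0" unfolding nsq_def by simp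

lemma ip_comm: "ip f g = ip g f" unfolding ip_def by (simp add: mult.commute)

lemma nsq_lin: assumes "f \<in> L2 M" "g \<in> L2 M"
  shows "nsq (\<lambda>x. a * f x + b * g x) = a\<^sup>2 * nsq f + 2*a*b * ip f g + b\<^sup>2 * nsq g"
proof -
  have "(\<lambda>x. (a * f x + b * g x)\<^sup>2) = (\<lambda>x. a\<^sup>2 * (f x)\<^sup>2 + 2*a*b * (f x * g x) + b\<^sup>2 * (g x)\<^sup>2)"
    by (auto simp: power2_eq_square algebra_simps)
  then show ?thesis unfolding nsq_def ip_def
    using assms L2_prod_int[OF assms] by (simp add: L2_def)
qed

lemma ip_lin: assumes "f \<in> L2 M" "g \<in> L2 M" "h \<in> L2 M"
  shows "ip (\<lambda>x. a * f x + b * g x) h = a * ip f h + b * ip g h"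
proof -
  have "(\<lambda>x. (a * f x + b * g x) * h x) = (\<lambda>x. a * (f x * h x) + b * (g x * h x))"
    by (auto simp: algebra_simps)
  then show ?thesis unfolding ip_def
    using L2_prod_int[OF assms(1,3)] L2_prod_int[OF assms(2,3)] by simp
qed

lemma nsq_P_lin: assumes "f \<in> L2 M" "g \<in> L2 M"
  shows "nsq (P (\<lambda>y. a * f y + b * g y)) = nsq (\<lambda>x. a * P f x + b * P g x)"
proof -
  have [measurable]: "P (\<lambda>y. a * f y + b * g y) \<in> borel_measurable M" "P f \<in> borel_measurable M" "P g \<in> borel_measurable M"
    using PL2[OF L2_lin[OF assms]] PL2[OF assms(1)] PL2[OF assms(2)] by (auto simp: L2_def)
  show ?thesis
    unfolding nsq_def using Plin[OF assms, of a b] by (intro integral_cong_AE) auto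
qed

lemma ip_P_lin: assumes "f \<in> L2 M" "g \<in> L2 M" "h \<in> L2 M"
  shows "ip (P (\<lambda>y. a * f y + b * g y)) h = ip (\<lambda>x. a * P f x + b * P g x) h"
proof -
  have [measurable]: "P (\<lambda>y. a * f y + b * g y) \<in> borel_measurable M" "P f \<in> borel_measurable M" "P g \<in> borel_measurable M"
    "h \<in> borel_measurable M"
    using PL2[OF L2_lin[OF assms(1,2)]] PL2[OF assms(1)] PL2[OF assms(2)] assms(3) by (auto simp: L2_def)
  show ?thesis
    unfolding ip_def using Plin[OF assms(1,2), of a b] by (intro integral_cong_AE) auto
qed

lemma q_lin: assumes "f \<in> L2 M" "g \<in> L2 M"
  shows "q (\<lambda>x. a * f x + b * g x) = a\<^sup>2 * q f + 2*a*b * B f g + b\<^sup>2 * q g"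
  unfolding q_def B_def using nsq_lin[OF assms] nsq_lin[OF PL2[OF assms(1)] PL2[OF assms(2)]] nsq_P_lin[OF assms]
  by (simp add: algebra_simps)

lemma q_nonneg: "f \<in> L2 M \<Longrightarrow> q f \<ge> 0"
  using Pcontr unfolding q_def by simp

lemma q_le: "q f \<le> nsq f"
  using nsq_nonneg unfolding q_def by simp

end

context setting begin

lemma nsq_sym: "nsq (\<lambda>x. f x - g x) = nsq (\<lambda>x. g x - f x)"
  unfolding nsq_def by (simp add: power2_commute)

lemma nsq_zero_AE: assumes "f \<in> L2 M" "nsq f = 0" shows "AE x in M. f x = 0"
proof -
  have "AE x in M. (f x)\<^sup>2 = 0"
    using assms integral_nonneg_eq_0_iff_AE[of M "\<lambda>x. (f x)\<^sup>2"] by (auto simp: L2_def nsq_def)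
  then show ?thesis by simp
qed

lemma qzero_fix:
  assumes G: "G \<in> L2 M" and q0: "q G = 0"
  shows "AE x in M. G x - Q (P G) x = 0"
proof -
  define u where "u x = G x - Q (P G) x" for x
  have PG: "P G \<in> L2 M" using PL2 G .
  have QPG: "Q (P G) \<in> L2 M" using QL2 PG .
  have uL2: "u \<in> L2 M" unfolding u_def[abs_def] using L2_diff[OF G QPG] .
  have "ip (P G) (P u) = ip (P u) (P G)" by (rule ip_comm)
  also have "\<dots> = ip u (Q (P G))" using adjI[OF uL2 PG] .
  finally have e1: "ip (P G) (P u) = ip u (Q (P G))" .
  have "B G u = ip G u - ip u (Q (P G))" unfolding B_def e1 ..
  also have "\<dots> = (\<integral>x. G x * u x - u x * Q (P G) x \<partial>M)"
    unfolding ip_def using L2_prod_int[OF G uL2] L2_prod_int[OF uL2 QPG] by simp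
  also have "\<dots> = nsq u" unfolding nsq_def
    by (intro Bochner_Integration.integral_cong) (auto simp: u_def power2_eq_square algebra_simps)
  finally have BGu: "B G u = nsq u" .
  define n where "n = nsq u"
  define c where "c = q u"
  have n0: "n \<ge> 0" unfolding n_def by (rule nsq_nonneg)
  have c0: "c \<ge> 0" unfolding c_def using q_nonneg[OF uL2] .
  have key: "0 \<le> 2 * s * n + s\<^sup>2 * c" for s
  proof -
    have "0 \<le> q (\<lambda>x. 1 * G x + s * u x)" using q_nonneg[OF L2_lin[OF G uL2]] .
    also have "\<dots> = 2 * s * n + s\<^sup>2 * c"
      using q_lin[OF G uL2, of 1 s] q0 BGu unfolding n_def c_def by simp
    finally show ?thesis .
  qed
  define d where "d = c + 1"
  have d: "d > 0" "c \<le> d" unfolding d_def using c0 by auto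
  have "0 \<le> 2 * (- n / d) * n + (- n / d)\<^sup>2 * c" using key .
  also have "(- n / d)\<^sup>2 * c = n\<^sup>2 * (c / d) / d" by (simp add: power2_eq_square field_simps)
  also have "\<dots> \<le> n\<^sup>2 * 1 / d"
    using d by (intro divide_right_mono mult_left_mono) auto
  finally have "0 \<le> - (n\<^sup>2 / d)" by (simp add: power2_eq_square field_simps)
  then have "n\<^sup>2 / d \<le> 0" by simp
  then have "n\<^sup>2 \<le> 0" using d(1) by (simp add: divide_le_0_iff)
  then have "n = 0" by simp
  then show ?thesis using nsq_zero_AE[OF uL2] unfolding n_def u_def by simp
qed

end

lemma small_inv: "(e::real) > 0 \<Longrightarrow> \<exists>N::nat. 1 / (real N + 1) < e"
proof -
  assume e: "e > 0"
  obtain N :: nat where N: "1 / e < real N" using reals_Archimedean2 by blast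
  have "1 / e < real N + 1" using N by simp
  then have "1 < e * (real N + 1)" using e by (simp add: field_simps)
  then show ?thesis using e by (intro exI[of _ N]) (simp add: field_simps)
qed

context setting begin

lemma ip_bound:
  assumes "u \<in> L2 M" "h \<in> L2 M" "s > 0"
  shows "ip u h \<le> (nsq u / s + s * nsq h) / 2"
proof -
  have pt: "u x * h x \<le> ((u x)\<^sup>2 / s + s * (h x)\<^sup>2) / 2" for x
  proof -
    have "0 \<le> (u x - s * h x)\<^sup>2" by simp
    then have "2 * s * (u x * h x) \<le> (u x)\<^sup>2 + s * (s * (h x)\<^sup>2)" by (simp add: power2_eq_square algebra_simps)
    then show ?thesis using assms(3) by (simp add: field_simps)
  qed
  have i1: "integrable M (\<lambda>x. (u x)\<^sup>2)" "integrable M (\<lambda>x. (h x)\<^sup>2)" using assms by (auto simp: L2_def)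
  have "ip u h \<le> (\<integral>x. ((u x)\<^sup>2 / s + s * (h x)\<^sup>2) / 2 \<partial>M)"
    unfolding ip_def using pt i1 L2_prod_int[OF assms(1,2)] by (intro integral_mono) auto
  also have "\<dots> = (nsq u / s + s * nsq h) / 2" unfolding nsq_def using i1 by simp
  finally show ?thesis .
qed

lemma minimize:
  assumes h: "h \<in> L2 M"
    and ex: "\<And>e. e > 0 \<Longrightarrow> \<exists>f\<in>L2 M. 1 \<le> ip f h \<and> q f \<le> e \<and> nsq f \<le> Bd"
  shows "\<exists>G\<in>L2 M. 1 \<le> ip G h \<and> q G = 0"
proof -
  define S where "S e = {f\<in>L2 M. 1 \<le> ip f h \<and> q f \<le> e}" for e
  define eps :: "nat \<Rightarrow> real" where "eps k = 1 / (real k + 1)" for k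
  define m where "m k = Inf (nsq ` S (eps k))" for k
  have eps_pos: "eps k > 0" for k unfolding eps_def by simp
  have eps_mono: "eps k \<le> eps j" if "j \<le> k" for j k unfolding eps_def using that
    by (intro divide_left_mono) auto
  have ne: "nsq ` S (eps k) \<noteq> {}" for k using ex[OF eps_pos[of k]] unfolding S_def by auto
  have bb: "bdd_below (nsq ` S e)" for e by (rule bdd_belowI[of _ 0]) (auto intro: nsq_nonneg)
  have m_lower: "m k \<le> nsq f" if "f \<in> S (eps k)" for k f
    unfolding m_def using that bb by (intro cInf_lower) auto
  have m_upper: "m k \<le> Bd" for k
  proof -
    obtain f where "f\<in>L2 M" "1 \<le> ip f h" "q f \<le> eps k" "nsq f \<le> Bd" using ex[OF eps_pos[of k]] by auto
    then show ?thesis using m_lower[of f k] unfolding S_def by auto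
  qed
  have m_nonneg: "m k \<ge> 0" for k
    unfolding m_def using ne by (intro cInf_greatest) (auto intro: nsq_nonneg)
  have m_mono: "m j \<le> m k" if "j \<le> k" for j k
  proof -
    have "S (eps k) \<subseteq> S (eps j)" unfolding S_def using eps_mono[OF that] by auto
    then show ?thesis unfolding m_def using ne[of k] bb by (intro cInf_superset_mono) auto
  qed
  have "\<exists>f. f \<in> S (eps k) \<and> nsq f < m k + eps k" for k
  proof -
    have "Inf (nsq ` S (eps k)) < m k + eps k" using eps_pos[of k] unfolding m_def by simp
    then show ?thesis using cInf_less_iff[OF ne bb] by auto
  qed
  then obtain fs where fsS: "\<And>k. fs k \<in> S (eps k)" and fsn: "\<And>k. nsq (fs k) < m k + eps k" by metis
  have fsL2: "fs k \<in> L2 M" for k using fsS unfolding S_def by auto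
  have fsip: "1 \<le> ip (fs k) h" for k using fsS unfolding S_def by auto
  have fsq: "q (fs k) \<le> eps k" for k using fsS unfolding S_def by auto
  have close: "nsq (\<lambda>x. fs j x - fs k x) \<le> 2 * (m k - m j) + 2 * eps j + 2 * eps k" if "j \<le> k" for j k
  proof -
    define a where "a x = 1/2 * fs j x + 1/2 * fs k x" for x
    define d where "d x = 1/2 * fs j x + (-1/2) * fs k x" for x
    have aL2: "a \<in> L2 M" unfolding a_def[abs_def] using L2_lin[OF fsL2 fsL2] .
    have dL2: "d \<in> L2 M" unfolding d_def[abs_def] using L2_lin[OF fsL2 fsL2] .
    have qa: "q a = 1/4 * q (fs j) + 1/2 * B (fs j) (fs k) + 1/4 * q (fs k)"
      unfolding a_def using q_lin[OF fsL2 fsL2, of "1/2" j "1/2" k] by (simp add: power2_eq_square)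
    have qd: "q d = 1/4 * q (fs j) - 1/2 * B (fs j) (fs k) + 1/4 * q (fs k)"
      unfolding d_def using q_lin[OF fsL2 fsL2, of "1/2" j "-1/2" k] by (simp add: power2_eq_square)
    have "q a \<le> (q (fs j) + q (fs k)) / 2" using qa qd q_nonneg[OF dL2] by simp
    also have "\<dots> \<le> eps j" using fsq[of j] fsq[of k] eps_mono[OF that] by simp
    finally have qa_le: "q a \<le> eps j" .
    have "ip a h = 1/2 * ip (fs j) h + 1/2 * ip (fs k) h"
      unfolding a_def using ip_lin[OF fsL2 fsL2 h] .
    then have "1 \<le> ip a h" using fsip[of j] fsip[of k] by simp
    then have "a \<in> S (eps j)" unfolding S_def using aL2 qa_le by auto
    then have ma: "m j \<le> nsq a" by (rule m_lower)
    have na: "nsq a = 1/4 * nsq (fs j) + 1/2 * ip (fs j) (fs k) + 1/4 * nsq (fs k)"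
      unfolding a_def using nsq_lin[OF fsL2 fsL2, of "1/2" j "1/2" k] by (simp add: power2_eq_square)
    have nd: "nsq (\<lambda>x. fs j x - fs k x) = nsq (fs j) - 2 * ip (fs j) (fs k) + nsq (fs k)"
      using nsq_lin[OF fsL2 fsL2, of 1 j "-1" k] by simp
    show ?thesis using nd na ma fsn[of j] fsn[of k] by simp
  qed
  have "convergent m"
  proof (rule Bseq_monoseq_convergent)
    have "norm (m n) \<le> \<bar>Bd\<bar> + 1" for n using m_upper[of n] m_nonneg[of n] by (smt (verit) real_norm_def)
    then show "Bseq m" by (intro BseqI') auto
    show "monoseq m" unfolding monoseq_def using m_mono by auto
  qed
  then have mC: "Cauchy m" by (rule convergent_Cauchy)
  have cau: "\<exists>N. \<forall>j\<ge>N. \<forall>k\<ge>N. (\<integral>x. (fs j x - fs k x)\<^sup>2 \<partial>M) < e" if e: "e > 0" for e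
  proof -
    obtain N1 where N1: "\<And>j k. j \<ge> N1 \<Longrightarrow> k \<ge> N1 \<Longrightarrow> dist (m j) (m k) < e / 4"
      using mC e unfolding Cauchy_def by (meson zero_less_divide_iff zero_less_numeral)
    obtain N2 where N2: "1 / (real N2 + 1) < e / 8"
      using small_inv[of "e/8"] e by auto
    show ?thesis
    proof (intro exI[of _ "max N1 N2"] allI impI)
      fix j k assume jk: "max N1 N2 \<le> j" "max N1 N2 \<le> k"
      have epsj: "eps j < e / 8" if "N2 \<le> j" for j using eps_mono[OF that] N2 unfolding eps_def by simp
      have gen: "nsq (\<lambda>x. fs j x - fs k x) < e" if "j \<le> k" "max N1 N2 \<le> j" "max N1 N2 \<le> k" for j k
      proof -
        have "nsq (\<lambda>x. fs j x - fs k x) \<le> 2 * (m k - m j) + 2 * eps j + 2 * eps k" using close[OF that(1)] .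
        moreover have "m k - m j < e / 4"
        proof -
          have "dist (m k) (m j) < e / 4" using N1[of k j] that by auto
          then show ?thesis unfolding dist_real_def by linarith
        qed
        moreover have "eps j < e / 8" "eps k < e / 8" using epsj that by auto
        ultimately show ?thesis by simp
      qed
      show "(\<integral>x. (fs j x - fs k x)\<^sup>2 \<partial>M) < e"
      proof (cases "j \<le> k")
        case True then show ?thesis using gen[OF True jk] unfolding nsq_def by simp
      next
        case False then have kj: "k \<le> j" by simp
        show ?thesis using gen[OF kj jk(2,1)] nsq_sym[of "fs k" "fs j"] unfolding nsq_def by simp
      qed
    qed
  qed
  obtain G where GL2: "G \<in> L2 M" and conv': "\<forall>e>0. \<exists>N. \<forall>k\<ge>N. (\<integral>x. (fs k x - G x)\<^sup>2 \<partial>M) < e"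
    using L2_complete[OF fsL2 cau] by blast
  have conv: "\<exists>N. \<forall>k\<ge>N. (\<integral>x. (fs k x - G x)\<^sup>2 \<partial>M) < e" if "e > 0" for e
    using conv' that by blast
  have ipG: "1 \<le> ip G h"
  proof (rule ccontr)
    assume "\<not> 1 \<le> ip G h"
    define e where "e = (1 - ip G h) / 2"
    have e: "e > 0" unfolding e_def using \<open>\<not> 1 \<le> ip G h\<close> by (simp add: field_simps not_le)
    define s where "s = e / (nsq h + 1)"
    have s: "s > 0" unfolding s_def using e nsq_nonneg[of h] by simp
    have snh: "s * nsq h < e" unfolding s_def using e nsq_nonneg[of h]
      by (simp add: field_simps)
    obtain N where N: "\<And>k. k \<ge> N \<Longrightarrow> (\<integral>x. (fs k x - G x)\<^sup>2 \<partial>M) < s * e" using conv[of "s * e"] s e by auto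
    define u where "u x = fs N x - G x" for x
    have uL2: "u \<in> L2 M" unfolding u_def[abs_def] using L2_diff[OF fsL2 GL2] .
    have nu: "nsq u < s * e" using N[of N] unfolding u_def nsq_def by simp
    have "ip u h \<le> (nsq u / s + s * nsq h) / 2" using ip_bound[OF uL2 h s] .
    also have "\<dots> < (e + e) / 2"
    proof -
      have "nsq u / s < e" using nu s by (simp add: field_simps)
      then show ?thesis using snh by simp
    qed
    finally have iu: "ip u h < e" by simp
    have "ip (fs N) h - ip u h = (\<integral>x. fs N x * h x - u x * h x \<partial>M)"
      unfolding ip_def using L2_prod_int[OF fsL2 h] L2_prod_int[OF uL2 h] by simp
    also have "\<dots> = ip G h" unfolding ip_def u_def
      by (intro Bochner_Integration.integral_cong) (auto simp: algebra_simps)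
    finally have "ip G h = ip (fs N) h - ip u h" by simp
    then have "ip G h > 1 - e" using iu fsip[of N] by simp
    then show False unfolding e_def using \<open>\<not> 1 \<le> ip G h\<close> by (simp add: field_simps)
  qed
  have qG: "q G \<le> e" if e: "e > 0" for e
  proof -
    obtain N where N: "\<And>k. k \<ge> N \<Longrightarrow> (\<integral>x. (fs k x - G x)\<^sup>2 \<partial>M) < e / 4" using conv[of "e/4"] e by auto
    obtain K where K: "1 / (real K + 1) < e / 4"
      using small_inv[of "e/4"] e by auto
    define k where "k = max N K"
    define u where "u x = G x - fs k x" for x
    have uL2: "u \<in> L2 M" unfolding u_def[abs_def] using L2_diff[OF GL2 fsL2] .
    have nu: "nsq u < e / 4" using N[of k] nsq_sym[of G "fs k"] unfolding u_def k_def nsq_def by simp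
    have ek: "eps k < e / 4" using eps_mono[of K k] K unfolding k_def eps_def by simp
    have q1: "q (\<lambda>x. 1 * fs k x + 1 * u x) = q (fs k) + 2 * B (fs k) u + q u"
      using q_lin[OF fsL2 uL2, of 1 k 1] by simp
    have q2: "q (\<lambda>x. 1 * fs k x + (-1) * u x) = q (fs k) - 2 * B (fs k) u + q u"
      using q_lin[OF fsL2 uL2, of 1 k "-1"] by simp
    have "(\<lambda>x. 1 * fs k x + 1 * u x) = G" unfolding u_def by auto
    then have "q G = q (fs k) + 2 * B (fs k) u + q u" using q1 by simp
    moreover have "q (\<lambda>x. 1 * fs k x + (-1) * u x) \<ge> 0" using q_nonneg[OF L2_lin[OF fsL2 uL2]] .
    ultimately have "q G \<le> 2 * q (fs k) + 2 * q u" using q2 by simp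
    also have "\<dots> \<le> 2 * eps k + 2 * nsq u" using fsq[of k] q_le[of u] by simp
    also have "\<dots> < e" using ek nu by simp
    finally show ?thesis by simp
  qed
  have "q G = 0"
  proof (rule antisym)
    show "q G \<le> 0" using qG by (meson dense not_le)
    show "0 \<le> q G" using q_nonneg[OF GL2] .
  qed
  then show ?thesis using GL2 ipG by auto
qed

end

lemma sq_split: assumes "(R::real) \<ge> 0" shows "y\<^sup>2 \<le> 2 * R * \<bar>y\<bar> + (max (\<bar>y\<bar> - R) 0)\<^sup>2"
proof (cases "\<bar>y\<bar> \<le> R")
  case True
  have "y\<^sup>2 = \<bar>y\<bar> * \<bar>y\<bar>" by (simp add: power2_eq_square)
  also have "\<dots> \<le> R * \<bar>y\<bar>" using True by (intro mult_right_mono) auto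
  finally have a: "y\<^sup>2 \<le> R * \<bar>y\<bar>" .
  have b: "0 \<le> R * \<bar>y\<bar>" using assms by simp
  have c: "0 \<le> (max (\<bar>y\<bar> - R) 0)\<^sup>2" by simp
  from a b c show ?thesis by linarith
next
  case False
  then have "max (\<bar>y\<bar> - R) 0 = \<bar>y\<bar> - R" by simp
  moreover have "y\<^sup>2 = \<bar>y\<bar>\<^sup>2" by simp
  ultimately show ?thesis by (simp add: power2_eq_square algebra_simps)
qed

context setting begin

lemma tail_int: assumes "f \<in> L2 M" "R \<ge> 0"
  shows "integrable M (\<lambda>x. (max (\<bar>P f x\<bar> - R) 0)\<^sup>2)"
    and "(\<integral>x. (max (\<bar>P f x\<bar> - R) 0)\<^sup>2 \<partial>M) \<le> nsq (P f)"
proof -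
  have PL: "P f \<in> L2 M" using PL2 assms(1) .
  then have [measurable]: "P f \<in> borel_measurable M" by (simp add: L2_def)
  have pt: "(max (\<bar>P f x\<bar> - R) 0)\<^sup>2 \<le> (P f x)\<^sup>2" for x
  proof -
    have "max (\<bar>P f x\<bar> - R) 0 \<le> \<bar>P f x\<bar>" "0 \<le> max (\<bar>P f x\<bar> - R) 0" using assms(2) by auto
    then have "(max (\<bar>P f x\<bar> - R) 0)\<^sup>2 \<le> \<bar>P f x\<bar>\<^sup>2" by (intro power_mono) auto
    then show ?thesis by simp
  qed
  have isq: "integrable M (\<lambda>x. (P f x)\<^sup>2)" using PL by (simp add: L2_def)
  have ms: "(\<lambda>x. (max (\<bar>P f x\<bar> - R) 0)\<^sup>2) \<in> borel_measurable M" by measurable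
  have nb: "AE x in M. norm ((max (\<bar>P f x\<bar> - R) 0)\<^sup>2) \<le> norm ((P f x)\<^sup>2)"
  proof (rule AE_I2)
    fix x
    have "0 \<le> (max (\<bar>P f x\<bar> - R) 0)\<^sup>2" by simp
    then show "norm ((max (\<bar>P f x\<bar> - R) 0)\<^sup>2) \<le> norm ((P f x)\<^sup>2)"
      using pt[of x] by (simp only: real_norm_def abs_of_nonneg zero_le_power2)
  qed
  show i: "integrable M (\<lambda>x. (max (\<bar>P f x\<bar> - R) 0)\<^sup>2)"
    by (rule Bochner_Integration.integrable_bound[OF isq ms nb])
  show "(\<integral>x. (max (\<bar>P f x\<bar> - R) 0)\<^sup>2 \<partial>M) \<le> nsq (P f)"
    unfolding nsq_def by (rule integral_mono[OF i isq pt])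
qed

lemma existence:
  assumes R: "R > 0" and t: "t < 1"
    and tail: "\<And>f. f \<in> unit_ball_L2 M \<Longrightarrow> (\<integral>x. (max (\<bar>P f x\<bar> - R) 0)\<^sup>2 \<partial>M) \<le> t"
    and big: "\<And>\<eta>. \<eta> > 0 \<Longrightarrow> \<exists>f\<in>unit_ball_L2 M. nsq (P f) > 1 - \<eta>"
    and e: "e > 0"
  shows "\<exists>f\<in>L2 M. 1 \<le> ip f (Q (\<lambda>_. 1)) \<and> q f \<le> e \<and> nsq f \<le> (4*R/(1-t))\<^sup>2"
proof -
  define h where "h = Q (\<lambda>_. 1)"
  have hL2: "h \<in> L2 M" unfolding h_def using QL2 L2_const by blast
  define \<delta> where "\<delta> = (1-t)/(4*R)"
  have \<delta>: "\<delta> > 0" unfolding \<delta>_def using R t by simp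
  define \<eta> where "\<eta> = min ((1-t)/2) (e * \<delta>\<^sup>2)"
  have \<eta>: "\<eta> > 0" unfolding \<eta>_def using t e \<delta> by simp
  obtain f where fB: "f \<in> unit_ball_L2 M" and fbig: "nsq (P f) > 1 - \<eta>" using big[OF \<eta>] by auto
  have fL2: "f \<in> L2 M" and f1: "nsq f \<le> 1" using fB by (auto simp: unit_ball_L2_def nsq_def)
  define g where "g x = \<bar>f x\<bar>" for x
  have gL2: "g \<in> L2 M" unfolding g_def[abs_def] using L2_abs[OF fL2] .
  have ng: "nsq g = nsq f" unfolding nsq_def g_def by simp
  have gB: "g \<in> unit_ball_L2 M" using gL2 ng f1 by (auto simp: unit_ball_L2_def nsq_def)
  have Pg0: "AE x in M. P g x \<ge> 0" using Ppos[OF gL2] by (auto simp: g_def)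
  have A1: "AE x in M. P (\<lambda>y. 1 * g y + (-1) * f y) x \<ge> 0"
    by (rule Ppos[OF L2_lin[OF gL2 fL2]]) (auto simp: g_def)
  have A2: "AE x in M. P (\<lambda>y. 1 * g y + 1 * f y) x \<ge> 0"
    by (rule Ppos[OF L2_lin[OF gL2 fL2]]) (auto simp: g_def)
  have "AE x in M. (P f x)\<^sup>2 \<le> (P g x)\<^sup>2"
    using A1 A2 Plin[OF gL2 fL2, of 1 "-1"] Plin[OF gL2 fL2, of 1 1]
  proof (eventually_elim)
    case (elim x)
    then have "0 \<le> P g x - P f x" "0 \<le> P g x + P f x" by simp_all
    then have "\<bar>P f x\<bar> \<le> \<bar>P g x\<bar>" by linarith
    then show ?case by (simp only: abs_le_square_iff)
  qed
  then have "nsq (P f) \<le> nsq (P g)" unfolding nsq_def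
    using PL2[OF fL2] PL2[OF gL2] by (intro integral_mono_AE) (auto simp: L2_def)
  then have Pgbig: "nsq (P g) > 1 - \<eta>" using fbig by simp
  have PgL2: "P g \<in> L2 M" using PL2[OF gL2] .
  then have [measurable]: "P g \<in> borel_measurable M" by (simp add: L2_def)
  have iabs: "integrable M (\<lambda>x. \<bar>P g x\<bar>)" using L2_integrable[OF prob_space_axioms L2_abs[OF PgL2]] .
  have R0: "R \<ge> 0" using R by simp
  have i_sq: "integrable M (\<lambda>x. (P g x)\<^sup>2)" using PgL2 by (simp add: L2_def)
  have i_t: "integrable M (\<lambda>x. (max (\<bar>P g x\<bar> - R) 0)\<^sup>2)" using tail_int(1)[OF gL2 R0] .
  have i_rhs: "integrable M (\<lambda>x. 2 * R * \<bar>P g x\<bar> + (max (\<bar>P g x\<bar> - R) 0)\<^sup>2)"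
    by (intro Bochner_Integration.integrable_add Bochner_Integration.integrable_mult_right iabs i_t)
  have "nsq (P g) \<le> (\<integral>x. 2 * R * \<bar>P g x\<bar> + (max (\<bar>P g x\<bar> - R) 0)\<^sup>2 \<partial>M)"
    unfolding nsq_def by (rule integral_mono[OF i_sq i_rhs sq_split[OF R0]])
  also have "\<dots> = 2 * R * (\<integral>x. \<bar>P g x\<bar> \<partial>M) + (\<integral>x. (max (\<bar>P g x\<bar> - R) 0)\<^sup>2 \<partial>M)"
    using iabs i_t by simp
  also have "\<dots> \<le> 2 * R * (\<integral>x. \<bar>P g x\<bar> \<partial>M) + t" using tail[OF gB] by simp
  finally have n_le: "nsq (P g) \<le> 2 * R * (\<integral>x. \<bar>P g x\<bar> \<partial>M) + t" .
  have "(\<integral>x. \<bar>P g x\<bar> \<partial>M) = ip (P g) (\<lambda>_. 1)"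
    unfolding ip_def using Pg0 by (intro integral_cong_AE) auto
  also have "\<dots> = ip g h" unfolding h_def using adjI[OF gL2 L2_const] .
  finally have absc: "(\<integral>x. \<bar>P g x\<bar> \<partial>M) = ip g h" .
  define c where "c = ip g h"
  have "1 - \<eta> - t < 2 * R * c" using n_le Pgbig absc unfolding c_def by simp
  moreover have "\<eta> \<le> (1-t)/2" unfolding \<eta>_def by (rule min.cobounded1)
  ultimately have "(1-t)/2 < 2 * R * c" by simp
  then have "\<delta> < c" unfolding \<delta>_def using R by (simp add: field_simps)
  then have c: "c > 0" "\<delta> < c" using \<delta> by auto
  define f' where "f' = (\<lambda>x. 1/c * g x + 0 * g x)"
  have f'L2: "f' \<in> L2 M" unfolding f'_def using L2_lin[OF gL2 gL2] .
  have "ip f' h = 1/c * ip g h + 0 * ip g h" unfolding f'_def using ip_lin[OF gL2 gL2 hL2] .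
  then have ipf: "ip f' h = 1" using c unfolding c_def by simp
  have qg: "q g < \<eta>" unfolding q_def using Pgbig ng f1 by simp
  have qg0: "q g \<ge> 0" using q_nonneg[OF gL2] .
  have "q f' = (1/c)\<^sup>2 * q g" unfolding f'_def using q_lin[OF gL2 gL2, of "1/c" 0] by simp
  also have "\<dots> = q g / c\<^sup>2" by (simp add: power_divide)
  also have "\<dots> \<le> (e * \<delta>\<^sup>2) / \<delta>\<^sup>2"
  proof (rule frac_le)
    show "0 \<le> e * \<delta>\<^sup>2" using e by simp
    show "q g \<le> e * \<delta>\<^sup>2" using qg unfolding \<eta>_def by simp
    show "0 < \<delta>\<^sup>2" using \<delta> by simp
    show "\<delta>\<^sup>2 \<le> c\<^sup>2" using c \<delta> by (intro power_mono) auto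
  qed
  also have "\<dots> = e" using \<delta> by simp
  finally have qf: "q f' \<le> e" .
  have "nsq f' = (1/c)\<^sup>2 * nsq g" unfolding f'_def using nsq_lin[OF gL2 gL2, of "1/c" 0] by simp
  also have "\<dots> = nsq g / c\<^sup>2" by (simp add: power_divide)
  also have "\<dots> \<le> 1 / \<delta>\<^sup>2"
  proof (rule frac_le)
    show "0 \<le> (1::real)" by simp
    show "nsq g \<le> 1" using ng f1 by simp
    show "0 < \<delta>\<^sup>2" using \<delta> by simp
    show "\<delta>\<^sup>2 \<le> c\<^sup>2" using c \<delta> by (intro power_mono) auto
  qed
  also have "\<dots> = (4*R/(1-t))\<^sup>2" unfolding \<delta>_def by (simp add: power_divide)
  finally have nf: "nsq f' \<le> (4*R/(1-t))\<^sup>2" .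
  have ipf': "1 \<le> ip f' (Q (\<lambda>_. 1))" using ipf unfolding h_def by simp
  show ?thesis using f'L2 ipf' qf nf by blast
qed

end

lemma antitone_lim:
  fixes F :: "real \<Rightarrow> real"
  assumes anti: "\<And>x y. 0 \<le> x \<Longrightarrow> x \<le> y \<Longrightarrow> F y \<le> F x" and nn: "\<And>x. 0 \<le> x \<Longrightarrow> 0 \<le> F x"
  shows "(F \<longlongrightarrow> Inf (F ` {0..})) at_top"
proof -
  have ne: "F ` {0..} \<noteq> {}" by auto
  have bb: "bdd_below (F ` {0..})" using nn by (intro bdd_belowI[of _ 0]) auto
  show ?thesis
  proof (rule order_tendstoI)
    fix a assume a: "a < Inf (F ` {0..})"
    show "eventually (\<lambda>x. a < F x) at_top"
      using eventually_ge_at_top[of "0::real"]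
    proof eventually_elim
      case (elim x)
      then have "Inf (F ` {0..}) \<le> F x" by (intro cInf_lower[OF _ bb]) auto
      then show ?case using a by simp
    qed
  next
    fix a assume "Inf (F ` {0..}) < a"
    then obtain y where y: "y \<ge> 0" "F y < a" using cInf_less_iff[OF ne bb] by auto
    show "eventually (\<lambda>x. F x < a) at_top"
      using eventually_ge_at_top[of y]
    proof eventually_elim
      case (elim x)
      then show ?case using anti[OF y(1) elim] y(2) by simp
    qed
  qed
qed

theorem corollary4p2:
  fixes M :: "'a measure" and P Q :: "('a \<Rightarrow> real) \<Rightarrow> ('a \<Rightarrow> real)"
  assumes "prob_space M"
    and "sub_markov M P"
    and "is_adjoint M P Q"
    and "trivial_kernel_id_minus M (\<lambda>f. Q (P f))"
  shows "op_norm2 M P < 1 \<longleftrightarrow> tail_norm M P < 1"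
proof -
  interpret S: setting M P Q
    using assms(1-3) unfolding setting_def setting_axioms_def by auto
  define val where "val f R = (\<integral>x. (max (\<bar>P f x\<bar> - R) 0)\<^sup>2 \<partial>M)" for f R
  define F where "F R = (SUP f\<in>unit_ball_L2 M. val f R)" for R
  have zB: "(\<lambda>_. 0) \<in> unit_ball_L2 M" unfolding unit_ball_L2_def using S.L2_const by auto
  have ballD: "f \<in> L2 M" "S.nsq f \<le> 1" if "f \<in> unit_ball_L2 M" for f
    using that unfolding unit_ball_L2_def S.nsq_def by auto
  have val_nn: "0 \<le> val f R" for f R unfolding val_def by simp
  have val_le: "val f R \<le> S.nsq (P f)" if "f \<in> unit_ball_L2 M" "R \<ge> 0" for f R
    unfolding val_def using S.tail_int(2)[OF ballD(1)[OF that(1)] that(2)] .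
  have Pf1: "S.nsq (P f) \<le> 1" if "f \<in> unit_ball_L2 M" for f
    using S.Pcontr[OF ballD(1)[OF that]] ballD(2)[OF that] by simp
  have bdd: "bdd_above ((\<lambda>f. val f R) ` unit_ball_L2 M)" if "R \<ge> 0" for R
  proof (rule bdd_aboveI[of _ 1])
    fix y assume "y \<in> (\<lambda>f. val f R) ` unit_ball_L2 M"
    then obtain f where f: "f \<in> unit_ball_L2 M" "y = val f R" by auto
    show "y \<le> 1" using val_le[OF f(1) that] Pf1[OF f(1)] f(2) by simp
  qed
  have F_upper: "val f R \<le> F R" if "f \<in> unit_ball_L2 M" "R \<ge> 0" for f R
    unfolding F_def using bdd[OF that(2)] that(1) by (intro cSUP_upper) auto
  have F_nn: "0 \<le> F R" if "R \<ge> 0" for R using F_upper[OF zB that] val_nn[of "\<lambda>_. 0" R] by simp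
  have F_anti: "F y \<le> F x" if "0 \<le> x" "x \<le> y" for x y
    unfolding F_def
  proof (rule cSUP_mono)
    show "unit_ball_L2 M \<noteq> {}" using zB by auto
    show "bdd_above ((\<lambda>f. val f x) ` unit_ball_L2 M)" using bdd that by simp
    fix f assume fB: "f \<in> unit_ball_L2 M"
    have PL: "P f \<in> L2 M" using S.PL2[OF ballD(1)[OF fB]] .
    have "val f y \<le> val f x" unfolding val_def
    proof (rule integral_mono)
      show "integrable M (\<lambda>x. (max (\<bar>P f x\<bar> - y) 0)\<^sup>2)" using S.tail_int(1)[OF ballD(1)[OF fB]] that by simp
      show "integrable M (\<lambda>xa. (max (\<bar>P f xa\<bar> - x) 0)\<^sup>2)" using S.tail_int(1)[OF ballD(1)[OF fB]] that by simp
      fix z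
      have a1: "0 \<le> max (\<bar>P f z\<bar> - y) 0" "max (\<bar>P f z\<bar> - y) 0 \<le> max (\<bar>P f z\<bar> - x) 0" using that by auto
      show "(max (\<bar>P f z\<bar> - y) 0)\<^sup>2 \<le> (max (\<bar>P f z\<bar> - x) 0)\<^sup>2" by (rule power_mono[OF a1(2) a1(1)])
    qed
    then show "\<exists>m\<in>unit_ball_L2 M. val f y \<le> val m x" using fB by auto
  qed
  have "tail_norm M P = Lim at_top F" unfolding tail_norm_def F_def val_def by simp
  also have "\<dots> = Inf (F ` {0..})"
    by (intro tendsto_Lim antitone_lim F_anti F_nn) auto
  finally have tailI: "tail_norm M P = Inf (F ` {0..})" .
  have Fbb: "bdd_below (F ` {0..})" using F_nn by (intro bdd_belowI[of _ 0]) auto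
  define s where "s = op_norm2 M P"
  have opbdd: "bdd_above ((\<lambda>f. sqrt (\<integral>x. (P f x)\<^sup>2 \<partial>M)) ` unit_ball_L2 M)"
  proof (rule bdd_aboveI[of _ 1])
    fix y assume "y \<in> (\<lambda>f. sqrt (\<integral>x. (P f x)\<^sup>2 \<partial>M)) ` unit_ball_L2 M"
    then obtain f where f: "f \<in> unit_ball_L2 M" "y = sqrt (S.nsq (P f))" unfolding S.nsq_def by auto
    show "y \<le> 1" using Pf1[OF f(1)] f(2) by simp
  qed
  have op_upper: "sqrt (S.nsq (P f)) \<le> s" if "f \<in> unit_ball_L2 M" for f
    unfolding s_def op_norm2_def S.nsq_def using opbdd that by (intro cSUP_upper) auto
  have s0: "0 \<le> s" using op_upper[OF zB] by (meson order_trans real_sqrt_ge_zero S.nsq_nonneg)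
  show ?thesis
  proof
    assume "op_norm2 M P < 1"
    then have s1: "s < 1" unfolding s_def .
    have "F 0 \<le> s\<^sup>2" unfolding F_def
    proof (rule cSUP_least)
      show "unit_ball_L2 M \<noteq> {}" using zB by auto
      fix f assume fB: "f \<in> unit_ball_L2 M"
      have "val f 0 \<le> S.nsq (P f)" using val_le[OF fB] by simp
      also have "\<dots> = (sqrt (S.nsq (P f)))\<^sup>2" using S.nsq_nonneg by simp
      also have "\<dots> \<le> s\<^sup>2" using op_upper[OF fB] S.nsq_nonneg[of "P f"] by (intro power_mono) auto
      finally show "val f 0 \<le> s\<^sup>2" .
    qed
    moreover have "Inf (F ` {0..}) \<le> F 0" using Fbb by (intro cInf_lower) auto
    moreover have "s\<^sup>2 < 1" using s0 s1 by (simp add: power_less_one_iff abs_square_less_1)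
    ultimately show "tail_norm M P < 1" unfolding tailI by simp
  next
    assume tl: "tail_norm M P < 1"
    show "op_norm2 M P < 1"
    proof (rule ccontr)
      assume "\<not> op_norm2 M P < 1"
      then have s1: "1 \<le> s" unfolding s_def by simp
      have "Inf (F ` {0..}) < 1" using tl tailI by simp
      then obtain R0 where R0: "R0 \<ge> 0" "F R0 < 1" using cInf_less_iff[of "F ` {0..}" 1] Fbb by auto
      define R where "R = R0 + 1"
      define t where "t = F R"
      have R: "R > 0" "R \<ge> 0" unfolding R_def using R0 by auto
      have t: "t < 1" unfolding t_def using F_anti[of R0 R] R0 unfolding R_def by simp
      have tail: "(\<integral>x. (max (\<bar>P f x\<bar> - R) 0)\<^sup>2 \<partial>M) \<le> t" if "f \<in> unit_ball_L2 M" for f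
        using F_upper[OF that R(2)] unfolding t_def val_def .
      have big: "\<exists>f\<in>unit_ball_L2 M. S.nsq (P f) > 1 - \<eta>" if \<eta>: "\<eta> > 0" for \<eta>
      proof -
        have "1 - \<eta>/2 < s" using s1 \<eta> by simp
        then obtain f where fB: "f \<in> unit_ball_L2 M" and fl: "1 - \<eta>/2 < sqrt (S.nsq (P f))"
          unfolding s_def op_norm2_def S.nsq_def using less_cSUP_iff[OF _ opbdd] zB by auto
        have "S.nsq (P f) > 1 - \<eta>"
        proof (cases "0 \<le> 1 - \<eta>/2")
          case True
          have "(1 - \<eta>/2)\<^sup>2 < (sqrt (S.nsq (P f)))\<^sup>2" using True fl by (intro power_strict_mono) auto
          also have "\<dots> = S.nsq (P f)" using S.nsq_nonneg by simp
          finally have "(1 - \<eta>/2)\<^sup>2 < S.nsq (P f)" .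
          moreover have "1 - \<eta> \<le> (1 - \<eta>/2)\<^sup>2" by (simp add: power2_eq_square algebra_simps)
          ultimately show ?thesis by simp
        next
          case False
          then have "1 - \<eta> < 0" by simp
          then show ?thesis using S.nsq_nonneg[of "P f"] by simp
        qed
        then show ?thesis using fB by auto
      qed
      have "\<exists>f\<in>L2 M. 1 \<le> S.ip f (Q (\<lambda>_. 1)) \<and> S.q f \<le> e \<and> S.nsq f \<le> (4*R/(1-t))\<^sup>2" if "e > 0" for e
        using S.existence[OF R(1) t tail big that] .
      then obtain G where GL2: "G \<in> L2 M" and ipG: "1 \<le> S.ip G (Q (\<lambda>_. 1))" and qG: "S.q G = 0"
        using S.minimize[OF S.QL2[OF S.L2_const]] by blast
      have "AE x in M. G x - Q (P G) x = 0" using S.qzero_fix[OF GL2 qG] .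
      then have G0: "AE x in M. G x = 0" using assms(4) GL2 unfolding trivial_kernel_id_minus_def by auto
      have hL2: "Q (\<lambda>_. 1) \<in> L2 M" using S.QL2[OF S.L2_const] .
      have [measurable]: "G \<in> borel_measurable M" "Q (\<lambda>_. 1) \<in> borel_measurable M"
        using GL2 hL2 by (auto simp: L2_def)
      have "S.ip G (Q (\<lambda>_. 1)) = (\<integral>x. 0 \<partial>M)" unfolding S.ip_def
        using G0 by (intro integral_cong_AE) auto
      then show False using ipG by simp
    qed
  qed
qed

end
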